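(* Let $n\ge m\ge 1$ and consider a Lagrangian $$L=L_0(\dot q^I,q^I)+\lambda^a C_a(\dot q^I,q^I),\qquad I=1,\dots,n,\quad a=1,\dots,m,$$ with dynamical variables $q^I(t)$, Lagrange multipliers $\lambda^a(t)$ (whose time derivatives do not appear in $L$), and constraints $C_a=0$ (summation over repeated indices). Write $L_{IJ}=\partial^2 L/\partial\dot q^I\partial\dot q^J$, $L^{IJ}$ for its inverse, and $C_{aI}=\partial C_a/\partial \dot q^I$. Assume: 1. (Nondegeneracy) $\det(L_{IJ})\neq 0$ on the constraint surface $C_a=0$. Then the equations $p_I=\partial L/\partial\dot q^I$ can be solved (locally) for $\dot q^I=\dot q^I(q^J,p_J,\lambda^b)$. 2. (The constraints do not reduce the phase space dimension of $q^I$) $\det(M_{ab})\neq 0$ on the constraint surface, where $M_{ab}=C_{aI}L^{IJ}C_{bJ}$. Then the constraints $C_a(\dot q^I(q,p,\lambda),q^I)=0$ can be solved (locally) for $\lambda^a=F^a(q^I,p_I)$. 3. Either (a) there is no point satisfying $C_a=0$ for all $a$ together with $\dot q^I=0$ and $\partial L/\partial q^I=0$ for all $I$; or (b) at every point satisfying $C_a=0$, $\dot q^I=0$ and $\partial L/\partial q^I=0$ (for all $a,I$), the $m\times n$ matrix $\left.\partial C_a/\partial q^I\right|_{\lambda=F}$ is not the zero matrix (i.e. at least one constraint depends on $q^I$ there). Then the on-shell Hamiltonian $$H_{\text{on-shell}}(q^I,p_I)=\dot q^I_{\lambda=F}\,p_I-L_0(\dot q^I_{\lambda=F},q^I),\qquad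 \dot q^I_{\lambda=F}=\dot q^I(q^J,p_J,\lambda^b)\big|_{\lambda=F},$$ regarded as a function of the independent phase-space variables $(q^I,p_I)$, has neither a local minimum nor a local maximum (in the interior of its domain).
   Context: This is a statement in finite-dimensional Lagrangian/Hamiltonian mechanics. $p_I=\partial L/\partial\dot q^I$ are the canonical momenta conjugate to $q^I$; the momenta conjugate to $\lambda^a$ vanish identically (primary constraints), and requiring their preservation in time yields the secondary constraints $C_a\approx 0$, which under condition 2 fix $\lambda^a=F^a(q,p)$, leaving all $2n$ variables $(q^I,p_I)$ unconstrained. The on-shell Hamiltonian is the canonical Hamiltonian $\dot q^I p_I-L$ restricted to this constraint surface (where the term $\lambda^aC_a$ vanishes). A local minimum/maximum means a local extremum of $H_{\text{on-shell}}$ as a function of $(q^I,p_I)$; points on the boundary of the domain of $(q^I,p_I)$ are not considered. *)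

theory Defs
  imports "HOL-Analysis.Analysis"
begin

definition C1_on :: "'a::real_normed_vector set \<Rightarrow> ('a \<Rightarrow> real) \<Rightarrow> bool" where
  "C1_on D f \<longleftrightarrow> (\<exists>f'. (\<forall>x\<in>D. (f has_derivative f' x) (at x)) \<and>
                       (\<forall>h. continuous_on D (\<lambda>x. f' x h)))"

definition C2_on :: "'a::real_normed_vector set \<Rightarrow> ('a \<Rightarrow> real) \<Rightarrow> bool" where
  "C2_on D f \<longleftrightarrow> (\<exists>f'. (\<forall>x\<in>D. (f has_derivative f' x) (at x)) \<and>
                       (\<forall>h. C1_on D (\<lambda>x. f' x h)))"

definition d_qdot :: "(real^'n \<Rightarrow> real^'n \<Rightarrow> real) \<Rightarrow> 'n \<Rightarrow> real^'n \<Rightarrow> real^'n \<Rightarrow> real" where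
  "d_qdot f I v q = deriv (\<lambda>t. f (v + t *\<^sub>R axis I 1) q) 0"

definition d_q :: "(real^'n \<Rightarrow> real^'n \<Rightarrow> real) \<Rightarrow> 'n \<Rightarrow> real^'n \<Rightarrow> real^'n \<Rightarrow> real" where
  "d_q f I v q = deriv (\<lambda>t. f v (q + t *\<^sub>R axis I 1)) 0"

definition Lfull :: "(real^'n \<Rightarrow> real^'n \<Rightarrow> real) \<Rightarrow> (real^'n \<Rightarrow> real^'n \<Rightarrow> real^'m)
    \<Rightarrow> real^'n \<Rightarrow> real^'n \<Rightarrow> real^'m \<Rightarrow> real" where
  "Lfull L0 C v q lam = L0 v q + (\<Sum>a\<in>UNIV. lam $ a * C v q $ a)"

definition Lmat :: "(real^'n \<Rightarrow> real^'n \<Rightarrow> real) \<Rightarrow> (real^'n \<Rightarrow> real^'n \<Rightarrow> real^'m)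
    \<Rightarrow> real^'n \<Rightarrow> real^'n \<Rightarrow> real^'m \<Rightarrow> real^'n^'n" where
  "Lmat L0 C v q lam = (\<chi> I J. d_qdot (\<lambda>v' q'. d_qdot (\<lambda>v'' q''. Lfull L0 C v'' q'' lam) J v' q') I v q)"

definition Cmat :: "(real^'n \<Rightarrow> real^'n \<Rightarrow> real^'m) \<Rightarrow> real^'n \<Rightarrow> real^'n \<Rightarrow> real^'n^'m" where
  "Cmat C v q = (\<chi> a I. d_qdot (\<lambda>v' q'. C v' q' $ a) I v q)"

definition Mmat :: "(real^'n \<Rightarrow> real^'n \<Rightarrow> real) \<Rightarrow> (real^'n \<Rightarrow> real^'n \<Rightarrow> real^'m)
    \<Rightarrow> real^'n \<Rightarrow> real^'n \<Rightarrow> real^'m \<Rightarrow> real^'m^'m" where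
  "Mmat L0 C v q lam = Cmat C v q ** matrix_inv (Lmat L0 C v q lam) ** transpose (Cmat C v q)"

definition H_onshell :: "(real^'n \<Rightarrow> real^'n \<Rightarrow> real) \<Rightarrow> (real^'n \<Rightarrow> real^'n \<Rightarrow> real^'n)
    \<Rightarrow> (real^'n) \<times> (real^'n) \<Rightarrow> real" where
  "H_onshell L0 qd z = (case z of (q, p) \<Rightarrow> (\<Sum>I\<in>UNIV. qd q p $ I * p $ I) - L0 (qd q p) q)"

definition local_min_at :: "'a::metric_space set \<Rightarrow> ('a \<Rightarrow> real) \<Rightarrow> 'a \<Rightarrow> bool" where
  "local_min_at U f z \<longleftrightarrow> (\<exists>e>0. \<forall>y\<in>U. dist y z < e \<longrightarrow> f z \<le> f y)"

definition local_max_at :: "'a::metric_space set \<Rightarrow> ('a \<Rightarrow> real) \<Rightarrow> 'a \<Rightarrow> bool" where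
  "local_max_at U f z \<longleftrightarrow> (\<exists>e>0. \<forall>y\<in>U. dist y z < e \<longrightarrow> f y \<le> f z)"

end

theory Submission
  imports Defs
begin


lemma key:
  fixes G :: "real \<Rightarrow> real \<Rightarrow> real" and phi :: "real \<Rightarrow> real \<Rightarrow> real" and psi :: "real \<Rightarrow> real"
  assumes c: "c > 0" and d: "d > 0" and e: "e > 0"
   and dt: "\<And>s t. 0 \<le> s \<Longrightarrow> s < d \<Longrightarrow> 0 \<le> t \<Longrightarrow> t < d \<Longrightarrow> ((\<lambda>t. G s t) has_real_derivative phi s t) (at t)"
   and ds: "\<And>s. 0 \<le> s \<Longrightarrow> s < d \<Longrightarrow> ((\<lambda>s. G s 0) has_real_derivative psi s) (at s)"
   and psib: "\<And>s. 0 \<le> s \<Longrightarrow> s < d \<Longrightarrow> \<bar>psi s\<bar> \<le> M * s"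
   and phib: "\<And>\<epsilon>. \<epsilon> > 0 \<Longrightarrow> \<exists>\<delta>>0. \<forall>s t. 0 \<le> s \<longrightarrow> s < \<delta> \<longrightarrow> 0 \<le> t \<longrightarrow> t < \<delta> \<longrightarrow> \<bar>phi s t + c * s\<bar> \<le> \<epsilon> * (s + t)"
  shows "\<exists>s t. 0 \<le> s \<and> s < e \<and> 0 \<le> t \<and> t < e \<and> G s t < G 0 0"
proof -
  define M' where "M' = max M 0"
  define l where "l = (M' + 1) / c"
  have l0: "l > 0" using c by (simp add: l_def M'_def)
  define eps where "eps = 1 / (2 * l * (1 + l))"
  have eps0: "eps > 0" using l0 by (simp add: eps_def)
  obtain \<delta> where \<delta>: "\<delta> > 0" and hb: "\<forall>s t. 0 \<le> s \<longrightarrow> s < \<delta> \<longrightarrow> 0 \<le> t \<longrightarrow> t < \<delta> \<longrightarrow> \<bar>phi s t + c * s\<bar> \<le> eps * (s + t)"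
    using phib[OF eps0] by blast
  define r where "r = min d (min \<delta> e)"
  have r0: "r > 0" using d \<delta> e by (simp add: r_def)
  define s where "s = r / (2 * (1 + l))"
  define t where "t = l * s"
  have s0: "s > 0" using r0 l0 by (simp add: s_def)
  have t0: "t > 0" using s0 l0 by (simp add: t_def)
  have sr: "s < r" using r0 l0 by (simp add: s_def field_simps) (smt (verit) mult_pos_pos)
  have tr: "t < r" using r0 l0 by (simp add: s_def t_def field_simps) (smt (verit) mult_pos_pos)
  have srd: "s < d" "s < \<delta>" "s < e" "t < d" "t < \<delta>" "t < e" using sr tr by (auto simp: r_def)
  obtain \<xi> where \<xi>: "0 < \<xi>" "\<xi> < s" "G s 0 - G 0 0 = (s - 0) * psi \<xi>"
    using MVT2[of 0 s "\<lambda>s. G s 0" psi] s0 srd ds by auto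
  have "psi \<xi> \<le> M' * s"
  proof -
    have "psi \<xi> \<le> M * \<xi>" using psib[of \<xi>] \<xi> srd by auto
    also have "\<dots> \<le> M' * \<xi>" using \<xi> by (simp add: M'_def mult_right_mono)
    also have "\<dots> \<le> M' * s" using \<xi> by (simp add: M'_def mult_left_mono)
    finally show ?thesis .
  qed
  then have A: "G s 0 - G 0 0 \<le> M' * s^2"
    using \<xi> s0 by (simp add: power2_eq_square)
  obtain \<eta> where \<eta>: "0 < \<eta>" "\<eta> < t" "G s t - G s 0 = (t - 0) * phi s \<eta>"
    using MVT2[of 0 t "\<lambda>t. G s t" "phi s"] t0 srd dt s0 by auto
  have "\<bar>phi s \<eta> + c * s\<bar> \<le> eps * (s + \<eta>)" using hb \<eta> srd s0 by auto
  moreover have "eps * (s + \<eta>) \<le> eps * (s + t)" using \<eta> eps0 by (simp add: mult_left_mono)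
  ultimately have "phi s \<eta> \<le> - c * s + eps * (s + t)" by linarith
  also have "\<dots> = - c * s + eps * (1 + l) * s" by (simp add: t_def algebra_simps)
  finally have B1: "phi s \<eta> \<le> - c * s + eps * (1 + l) * s" .
  have "G s t - G s 0 \<le> t * (- c * s + eps * (1 + l) * s)"
    using \<eta> B1 t0 by (simp add: mult_left_mono)
  also have "\<dots> = - (M' + 1) * s^2 + s^2 / 2"
  proof -
    have lc: "l * c = M' + 1" using c by (simp add: l_def)
    have el: "eps * l * (1 + l) = 1 / 2" using l0 by (simp add: eps_def)
    have "t * (- c * s + eps * (1 + l) * s) = - (l * c) * s^2 + (eps * l * (1 + l)) * s^2"
      by (simp add: t_def algebra_simps power2_eq_square)
    then show ?thesis using lc el by simp
  qed
  finally have B: "G s t - G s 0 \<le> - (M' + 1) * s^2 + s^2 / 2" .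
  have "s^2 > 0" using s0 by simp
  moreover have "- (M' + 1) * s^2 = - (M' * s^2) - s^2" by (simp add: algebra_simps)
  ultimately have "G s t < G 0 0" using A B by linarith
  then show ?thesis using s0 t0 srd by (intro exI[of _ s] exI[of _ t]) auto
qed



lemma bexp: "(\<Sum>I\<in>UNIV. (y $ I) *\<^sub>R axis I 1) = (y::real^'n)"
  using basis_expansion[of y] unfolding scalar_mult_eq_scaleR .

lemma vec_has_derivative:
  fixes f :: "'a::real_normed_vector \<Rightarrow> real^'n"
  assumes "\<And>I. ((\<lambda>z. f z $ I) has_derivative f' I) (at x)"
  shows "(f has_derivative (\<lambda>h. \<chi> I. f' I h)) (at x)"
proof -
  have e1: "f = (\<lambda>z. \<Sum>I\<in>UNIV. (f z $ I) *\<^sub>R axis I 1)"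
    by (simp add: bexp)
  have e2: "(\<lambda>h. \<chi> I. f' I h) = (\<lambda>h. \<Sum>I\<in>UNIV. (f' I h) *\<^sub>R axis I (1::real))"
  proof
    fix h show "(\<chi> I. f' I h) = (\<Sum>I\<in>UNIV. (f' I h) *\<^sub>R axis I (1::real))"
      using bexp[of "\<chi> I. f' I h"] by simp
  qed
  have "((\<lambda>z. \<Sum>I\<in>UNIV. (f z $ I) *\<^sub>R axis I 1) has_derivative (\<lambda>h. \<Sum>I\<in>UNIV. (f' I h) *\<^sub>R axis I (1::real))) (at x)"
    by (intro has_derivative_sum has_derivative_scaleR_left assms)
  then show ?thesis using e1 e2 by simp
qed

lemma d_qdot_eq:
  assumes "((\<lambda>(v,q). f v q) has_derivative f') (at (v,q))"
  shows "d_qdot f I v q = f' (axis I 1, 0)"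
proof -
  have p: "((\<lambda>t::real. (v + t *\<^sub>R axis I 1, q)) has_derivative (\<lambda>t. t *\<^sub>R (axis I 1, 0))) (at 0)"
    by (auto intro!: derivative_eq_intros simp: scaleR_prod_def)
  have a2: "((\<lambda>(v,q). f v q) has_derivative f') (at (v + 0 *\<^sub>R axis I 1, q))" using assms by simp
  have "((\<lambda>t. (\<lambda>(v,q). f v q) (v + t *\<^sub>R axis I 1, q)) has_derivative (\<lambda>t. f' (t *\<^sub>R (axis I 1, 0)))) (at 0)"
    using has_derivative_compose[OF p a2] by simp
  moreover have "(\<lambda>t. f' (t *\<^sub>R (axis I 1, 0))) = (\<lambda>t. f' (axis I 1, 0) * t)"
  proof
    fix t :: real
    have "linear f'" using has_derivative_bounded_linear[OF assms] bounded_linear.linear by blast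
    then show "f' (t *\<^sub>R (axis I 1, 0)) = f' (axis I 1, 0) * t" using linear_scale[of f' t "(axis I 1, 0)"] by (simp add: mult.commute del: scaleR_Pair)
  qed
  ultimately have "((\<lambda>t. f (v + t *\<^sub>R axis I 1) q) has_real_derivative f' (axis I 1, 0)) (at 0)"
    by (simp add: has_field_derivative_def)
  then show ?thesis unfolding d_qdot_def by (rule DERIV_imp_deriv)
qed

lemma d_q_eq:
  assumes "((\<lambda>(v,q). f v q) has_derivative f') (at (v,q))"
  shows "d_q f I v q = f' (0, axis I 1)"
proof -
  have p: "((\<lambda>t::real. (v, q + t *\<^sub>R axis I 1)) has_derivative (\<lambda>t. t *\<^sub>R (0, axis I 1))) (at 0)"
    by (auto intro!: derivative_eq_intros simp: scaleR_prod_def)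
  have a2: "((\<lambda>(v,q). f v q) has_derivative f') (at (v, q + 0 *\<^sub>R axis I 1))" using assms by simp
  have "((\<lambda>t. (\<lambda>(v,q). f v q) (v, q + t *\<^sub>R axis I 1)) has_derivative (\<lambda>t. f' (t *\<^sub>R (0, axis I 1)))) (at 0)"
    using has_derivative_compose[OF p a2] by simp
  moreover have "(\<lambda>t. f' (t *\<^sub>R (0, axis I 1))) = (\<lambda>t. f' (0, axis I 1) * t)"
  proof
    fix t :: real
    have "linear f'" using has_derivative_bounded_linear[OF assms] bounded_linear.linear by blast
    then show "f' (t *\<^sub>R (0, axis I 1)) = f' (0, axis I 1) * t" using linear_scale[of f' t "(0, axis I 1)"] by (simp add: mult.commute del: scaleR_Pair)
  qed
  ultimately have "((\<lambda>t. f v (q + t *\<^sub>R axis I 1)) has_real_derivative f' (0, axis I 1)) (at 0)"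
    by (simp add: has_field_derivative_def)
  then show ?thesis unfolding d_q_def by (rule DERIV_imp_deriv)
qed

lemma lin_sum_axis:
  fixes L :: "(real^'n) \<times> 'b::real_normed_vector \<Rightarrow> real"
  assumes "linear L"
  shows "(\<Sum>I\<in>UNIV. v $ I * L (axis I 1, 0)) = L (v, 0)"
proof -
  have "(v, 0::'b) = (\<Sum>I\<in>UNIV. (v $ I) *\<^sub>R (axis I 1, 0::'b))"
    using bexp[of v] by (simp add: fst_sum snd_sum prod_eq_iff)
  then have "L (v, 0) = (\<Sum>I\<in>UNIV. (v $ I) * L (axis I 1, 0))"
    using assms by (simp add: linear_sum linear_scale del: scaleR_Pair)
  then show ?thesis by simp
qed

lemma lin_pair_split:
  fixes L :: "'a::real_vector \<times> 'b::real_vector \<Rightarrow> real"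
  assumes "linear L"
  shows "L (x, y) = L (x, 0) + L (0, y)"
proof -
  have "(x, y) = (x, 0) + (0, y)" by simp
  then show ?thesis using linear_add[OF assms, of "(x,0)" "(0,y)"] by simp
qed

lemma Lfull_deriv:
  assumes "(L0c has_derivative L0') (at x)"
    and "\<And>a. (Cc a has_derivative Cd a) (at x)"
    and "L0c = (\<lambda>(v,q). L0 v q)" and "\<And>a. Cc a = (\<lambda>(v,q). C v q $ a)"
  shows "((\<lambda>(v,q). Lfull L0 C v q lam) has_derivative (\<lambda>h. L0' h + (\<Sum>a\<in>UNIV. lam $ a * Cd a h))) (at x)"
proof -
  have e: "(\<lambda>(v,q). Lfull L0 C v q lam) = (\<lambda>y. L0c y + (\<Sum>a\<in>UNIV. lam $ a * Cc a y))"
    using assms(3,4) by (auto simp: Lfull_def fun_eq_iff split_beta)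
  show ?thesis unfolding e
    by (intro has_derivative_add has_derivative_sum has_derivative_mult_right assms(1,2))
qed

lemma line_deriv:
  assumes "(f has_derivative f') (at (x + t *\<^sub>R w))"
  shows "((\<lambda>t. f (x + t *\<^sub>R w)) has_real_derivative f' w) (at t)"
proof -
  have p: "((\<lambda>t. x + t *\<^sub>R w) has_derivative (\<lambda>t. t *\<^sub>R w)) (at t)"
    by (auto intro!: derivative_eq_intros)
  have "((\<lambda>t. f (x + t *\<^sub>R w)) has_derivative (\<lambda>t. f' (t *\<^sub>R w))) (at t)"
    using has_derivative_compose[OF p assms] by simp
  moreover have "(\<lambda>t. f' (t *\<^sub>R w)) = (\<lambda>t. f' w * t)"
  proof
    fix t :: real
    have "linear f'" using has_derivative_bounded_linear[OF assms] bounded_linear.linear by blast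
    then show "f' (t *\<^sub>R w) = f' w * t" using linear_scale[of f' t w] by (simp add: mult.commute)
  qed
  ultimately show ?thesis by (simp add: has_field_derivative_def)
qed

lemma norm_bd:
  fixes ew w :: "'a::real_normed_vector"
  assumes "norm ew = 1" "0 \<le> s" "0 \<le> t"
  shows "norm (s *\<^sub>R ew + t *\<^sub>R w) \<le> (s + t) * (1 + norm w)"
proof -
  have "norm (s *\<^sub>R ew + t *\<^sub>R w) \<le> norm (s *\<^sub>R ew) + norm (t *\<^sub>R w)" by (rule norm_triangle_ineq)
  also have "\<dots> = s + t * norm w" using assms by simp
  also have "\<dots> \<le> (s + t) * (1 + norm w)" using assms by (simp add: algebra_simps)
  finally show ?thesis .
qed



theorem theorem2:
  fixes L0 :: "real^'n \<Rightarrow> real^'n \<Rightarrow> real"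
    and C :: "real^'n \<Rightarrow> real^'n \<Rightarrow> real^'m"
    and D :: "((real^'n) \<times> (real^'n)) set"
    and U :: "((real^'n) \<times> (real^'n)) set"
    and qd :: "real^'n \<Rightarrow> real^'n \<Rightarrow> real^'n"
    and F :: "real^'n \<Rightarrow> real^'n \<Rightarrow> real^'m"
  assumes dims: "CARD('m) \<le> CARD('n)"
    and D_open: "open D"
    and L0_C2: "C2_on D (\<lambda>(v, q). L0 v q)"
    and C_C2: "\<forall>a. C2_on D (\<lambda>(v, q). C v q $ a)"
    and nondeg: "\<forall>v q lam. (v, q) \<in> D \<and> C v q = 0 \<longrightarrow> det (Lmat L0 C v q lam) \<noteq> 0"
    and Mnondeg: "\<forall>v q lam. (v, q) \<in> D \<and> C v q = 0 \<longrightarrow> det (Mmat L0 C v q lam) \<noteq> 0"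
    and cond3: "(\<not> (\<exists>v q lam. (v, q) \<in> D \<and> C v q = 0 \<and> v = 0 \<and>
                    (\<forall>I. d_q (\<lambda>v' q'. Lfull L0 C v' q' lam) I v q = 0)))
              \<or> (\<forall>v q lam. (v, q) \<in> D \<and> C v q = 0 \<and> v = 0 \<and>
                    (\<forall>I. d_q (\<lambda>v' q'. Lfull L0 C v' q' lam) I v q = 0)
                  \<longrightarrow> (\<exists>a I. d_q (\<lambda>v' q'. C v' q' $ a) I v q \<noteq> 0))"
    and U_open: "open U"
    and qd_C1: "\<forall>I. C1_on U (\<lambda>(q, p). qd q p $ I)"
    and F_C1: "\<forall>a. C1_on U (\<lambda>(q, p). F q p $ a)"
    and sol: "\<forall>(q, p)\<in>U. (qd q p, q) \<in> D \<and> C (qd q p) q = 0 \<and>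
               (\<forall>I. p $ I = d_qdot (\<lambda>v q'. Lfull L0 C v q' (F q p)) I (qd q p) q)"
  shows "\<forall>z\<in>U. \<not> local_min_at U (H_onshell L0 qd) z \<and> \<not> local_max_at U (H_onshell L0 qd) z"
proof -
  define H where "H = H_onshell L0 qd"
  define qv where "qv = (\<lambda>z::(real^'n)\<times>(real^'n). qd (fst z) (snd z))"
  define Q where "Q = (\<lambda>z::(real^'n)\<times>(real^'n). (qv z, fst z))"
  define Fv where "Fv = (\<lambda>z::(real^'n)\<times>(real^'n). F (fst z) (snd z))"
  define L0c where "L0c = (\<lambda>(v::real^'n, q::real^'n). L0 v q)"
  define Cc where "Cc = (\<lambda>a. \<lambda>(v::real^'n, q::real^'n). C v q $ a)"
  obtain L0' where L0d: "\<And>x. x \<in> D \<Longrightarrow> (L0c has_derivative L0' x) (at x)"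
      and L0C1: "\<And>h. C1_on D (\<lambda>x. L0' x h)"
    using L0_C2 unfolding C2_on_def L0c_def by blast
  have "\<forall>a. \<exists>f'. (\<forall>x\<in>D. (Cc a has_derivative f' x) (at x)) \<and> (\<forall>h. C1_on D (\<lambda>x. f' x h))"
    using C_C2 unfolding C2_on_def Cc_def by blast
  then have "\<exists>Cd. \<forall>a. (\<forall>x\<in>D. (Cc a has_derivative Cd a x) (at x)) \<and> (\<forall>h. C1_on D (\<lambda>x. Cd a x h))"
    by (rule choice)
  then obtain Cd where Cdd: "\<And>a x. x \<in> D \<Longrightarrow> (Cc a has_derivative Cd a x) (at x)"
      and CdC1: "\<And>a h. C1_on D (\<lambda>x. Cd a x h)"
    by blast
  have eqd: "\<And>I. (\<lambda>(q, p). qd q p $ I) = (\<lambda>z. qv z $ I)" by (auto simp: qv_def fun_eq_iff)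
  have "\<forall>I. \<exists>f'. (\<forall>x\<in>U. ((\<lambda>z. qv z $ I) has_derivative f' x) (at x))"
    using qd_C1 unfolding C1_on_def eqd by blast
  then have "\<exists>qd'. \<forall>I. (\<forall>x\<in>U. ((\<lambda>z. qv z $ I) has_derivative qd' I x) (at x))"
    by (rule choice)
  then obtain qd' where qdd: "\<And>I z. z \<in> U \<Longrightarrow> ((\<lambda>z. qv z $ I) has_derivative qd' I z) (at z)"
    by blast
  have eqF: "\<And>a. (\<lambda>(q, p). F q p $ a) = (\<lambda>z. Fv z $ a)" by (auto simp: Fv_def fun_eq_iff)
  have "\<forall>a. \<exists>f'. (\<forall>x\<in>U. ((\<lambda>z. Fv z $ a) has_derivative f' x) (at x))"
    using F_C1 unfolding C1_on_def eqF by blast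
  then have "\<exists>F'. \<forall>a. (\<forall>x\<in>U. ((\<lambda>z. Fv z $ a) has_derivative F' a x) (at x))"
    by (rule choice)
  then obtain F' where Fd: "\<And>a z. z \<in> U \<Longrightarrow> ((\<lambda>z. Fv z $ a) has_derivative F' a z) (at z)"
    by blast
  have sol': "Q z \<in> D \<and> C (qv z) (fst z) = 0 \<and>
      (\<forall>I. snd z $ I = d_qdot (\<lambda>v q'. Lfull L0 C v q' (Fv z)) I (qv z) (fst z))" if "z \<in> U" for z
  proof -
    obtain q p where z: "z = (q, p)" by (cases z)
    show ?thesis using sol that unfolding z by (auto simp: Q_def qv_def Fv_def)
  qed
  have Lfd: "((\<lambda>(v,q). Lfull L0 C v q lam) has_derivative (\<lambda>h. L0' x h + (\<Sum>a\<in>UNIV. lam $ a * Cd a x h))) (at x)"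
    if "x \<in> D" for x lam
    by (rule Lfull_deriv[where L0c=L0c and Cc=Cc, OF L0d[OF that] Cdd[OF that]]) (auto simp: L0c_def Cc_def)
  have linL0: "linear (L0' x)" if "x \<in> D" for x
    using has_derivative_bounded_linear[OF L0d[OF that]] bounded_linear.linear by blast
  have linCd: "linear (Cd a x)" if "x \<in> D" for a x
    using has_derivative_bounded_linear[OF Cdd[OF that]] bounded_linear.linear by blast
  have pI: "snd z $ I = L0' (Q z) (axis I 1, 0) + (\<Sum>a\<in>UNIV. Fv z $ a * Cd a (Q z) (axis I 1, 0))"
    if "z \<in> U" for z I
  proof -
    have "Q z = (qv z, fst z)" by (simp add: Q_def)
    then have "((\<lambda>(v,q). Lfull L0 C v q (Fv z)) has_derivative (\<lambda>h. L0' (Q z) h + (\<Sum>a\<in>UNIV. Fv z $ a * Cd a (Q z) h))) (at (qv z, fst z))"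
      using Lfd[of "Q z" "Fv z"] sol'[OF that] by simp
    from d_qdot_eq[where f="\<lambda>v q'. Lfull L0 C v q' (Fv z)", OF this]
    show ?thesis using sol'[OF that] by simp
  qed
  define DQ where "DQ = (\<lambda>z h. ((\<chi> I. qd' I z h), fst (h::(real^'n)\<times>(real^'n))))"
  have Qd: "(Q has_derivative DQ z) (at z)" if "z \<in> U" for z
  proof -
    have "(qv has_derivative (\<lambda>h. \<chi> I. qd' I z h)) (at z)"
      by (rule vec_has_derivative) (rule qdd[OF that])
    then show ?thesis unfolding Q_def DQ_def
      by (intro has_derivative_Pair has_derivative_fst[OF has_derivative_ident])
  qed
  have constr: "Cd a (Q z) (DQ z h) = 0" if "z \<in> U" for z a h
  proof -
    have d1: "((\<lambda>z. Cc a (Q z)) has_derivative (\<lambda>h. Cd a (Q z) (DQ z h))) (at z)"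
      using has_derivative_compose[OF Qd[OF that] Cdd[OF conjunct1[OF sol'[OF that]]]] .
    have d0: "((\<lambda>z. Cc a (Q z)) has_derivative (\<lambda>h. 0)) (at z)"
    proof (rule has_derivative_transform_within_open[OF has_derivative_const U_open that])
      fix y assume "y \<in> U"
      then show "0 = Cc a (Q y)" using sol'[of y] by (simp add: Cc_def Q_def)
    qed
    show ?thesis using has_derivative_unique[OF d1 d0] by metis
  qed
  define DH where "DH = (\<lambda>z h. (\<Sum>I\<in>UNIV. qv z $ I * snd h $ I) - L0' (Q z) (0, fst h)
      - (\<Sum>a\<in>UNIV. Fv z $ a * Cd a (Q z) (0, fst (h::(real^'n)\<times>(real^'n)))))"
  have Hd: "(H has_derivative DH z) (at z)" if "z \<in> U" for z
  proof -
    have He: "H = (\<lambda>z. (\<Sum>I\<in>UNIV. qv z $ I * snd z $ I) - L0c (Q z))"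
      by (auto simp: H_def H_onshell_def fun_eq_iff qv_def L0c_def Q_def split: prod.splits)
    have sndI: "((\<lambda>x::(real^'n)\<times>(real^'n). snd x $ I) has_derivative (\<lambda>h. snd h $ I)) (at z)" for I
      by (intro bounded_linear_imp_has_derivative bounded_linear_compose[OF bounded_linear_vec_nth bounded_linear_snd])
    have raw: "(H has_derivative (\<lambda>h. (\<Sum>I\<in>UNIV. qv z $ I * snd h $ I + qd' I z h * snd z $ I) - L0' (Q z) (DQ z h))) (at z)"
      unfolding He
      by (intro has_derivative_diff has_derivative_sum has_derivative_mult qdd[OF that]
            sndI
            has_derivative_compose[OF Qd[OF that] L0d[OF conjunct1[OF sol'[OF that]]]])
    have "(\<lambda>h. (\<Sum>I\<in>UNIV. qv z $ I * snd h $ I + qd' I z h * snd z $ I) - L0' (Q z) (DQ z h)) = DH z"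
    proof
      fix h
      define v' where "v' = (\<chi> I. qd' I z h)"
      have QD: "Q z \<in> D" using sol'[OF that] by simp
      have "(\<Sum>I\<in>UNIV. qd' I z h * snd z $ I) =
          (\<Sum>I\<in>UNIV. v' $ I * L0' (Q z) (axis I 1, 0)) + (\<Sum>I\<in>UNIV. \<Sum>a\<in>UNIV. Fv z $ a * (v' $ I * Cd a (Q z) (axis I 1, 0)))"
        by (simp add: pI[OF that] v'_def distrib_left sum.distrib sum_distrib_left mult.left_commute)
      also have "\<dots> = (\<Sum>I\<in>UNIV. v' $ I * L0' (Q z) (axis I 1, 0)) + (\<Sum>a\<in>UNIV. Fv z $ a * (\<Sum>I\<in>UNIV. v' $ I * Cd a (Q z) (axis I 1, 0)))"
        by (subst sum.swap) (simp add: sum_distrib_left)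
      also have "\<dots> = L0' (Q z) (v', 0) + (\<Sum>a\<in>UNIV. Fv z $ a * Cd a (Q z) (v', 0))"
        using lin_sum_axis[OF linL0[OF QD]] lin_sum_axis[OF linCd[OF QD]] by simp
      also have "\<dots> = L0' (Q z) (v', 0) - (\<Sum>a\<in>UNIV. Fv z $ a * Cd a (Q z) (0, fst h))"
      proof -
        have "Cd a (Q z) (v', 0) = - Cd a (Q z) (0, fst h)" for a
          using lin_pair_split[OF linCd[OF QD], of a v' "fst h"] constr[OF that, of a h]
          by (simp add: DQ_def v'_def)
        then show ?thesis by (simp add: sum_negf)
      qed
      finally have S: "(\<Sum>I\<in>UNIV. qd' I z h * snd z $ I) = L0' (Q z) (v', 0) - (\<Sum>a\<in>UNIV. Fv z $ a * Cd a (Q z) (0, fst h))" .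
      have L: "L0' (Q z) (DQ z h) = L0' (Q z) (v', 0) + L0' (Q z) (0, fst h)"
        using lin_pair_split[OF linL0[OF QD], of v' "fst h"] by (simp add: DQ_def v'_def)
      show "(\<Sum>I\<in>UNIV. qv z $ I * snd h $ I + qd' I z h * snd z $ I) - L0' (Q z) (DQ z h) = DH z h"
        using S L by (simp add: DH_def sum.distrib)
    qed
    then show ?thesis using raw by simp
  qed
  have main: False if z0U: "z0 \<in> U" and sg: "sg = 1 \<or> sg = (-1::real)" and e0: "e0 > 0"
      and ext: "\<forall>y\<in>U. dist y z0 < e0 \<longrightarrow> sg * H z0 \<le> sg * H y" for z0 sg e0
  proof -
    have sg2: "sg * sg = 1" using sg by auto
    have sg0: "sg \<noteq> 0" using sg by auto
    obtain \<rho> where \<rho>: "\<rho> > 0" "ball z0 \<rho> \<subseteq> U" using U_open z0U open_contains_ball by blast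
    have ev: "eventually (\<lambda>y. sg * H z0 \<le> sg * H y) (at z0)"
      unfolding eventually_at
    proof (intro exI[of _ "min \<rho> e0"] conjI ballI impI)
      show "min \<rho> e0 > 0" using \<rho> e0 by simp
      fix y assume "y \<in> UNIV" "y \<noteq> z0 \<and> dist y z0 < min \<rho> e0"
      then have "y \<in> U" "dist y z0 < e0" using \<rho> by (auto simp: dist_commute subset_eq)
      then show "sg * H z0 \<le> sg * H y" using ext by blast
    qed
    have "(\<lambda>h. sg * DH z0 h) = (\<lambda>h. 0)"
      by (rule has_derivative_local_min[OF has_derivative_mult_right[OF Hd[OF z0U]] ev])
    then have DH0: "DH z0 h = 0" for h using sg0 by (metis mult_eq_0_iff)
    have QD0: "Q z0 \<in> D" and C0: "C (qv z0) (fst z0) = 0" using sol'[OF z0U] by auto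
    have lin0: "linear (L0' (Q z0))" using linL0[OF QD0] .
    have linC0: "linear (Cd a (Q z0))" for a using linCd[OF QD0] .
    have qv0: "qv z0 = 0"
    proof -
      have "qv z0 $ J = 0" for J
      proof -
        have "DH z0 (0, axis J 1) = qv z0 $ J"
        proof -
          have "L0' (Q z0) (0, 0) = 0" "\<And>b. Cd b (Q z0) (0, 0) = 0"
            using linear_0[OF lin0] linear_0[OF linC0] by (auto simp: zero_prod_def)
          then show ?thesis by (simp add: DH_def axis_def if_distrib sum.delta cong: if_cong)
        qed
        then show ?thesis using DH0 by simp
      qed
      then show ?thesis by (simp add: vec_eq_iff)
    qed
    define q0 where "q0 = fst z0"
    have Qz0: "Q z0 = (0, q0)" by (simp add: Q_def qv0 q0_def)
    have critq: "L0' (Q z0) (0, axis K 1) + (\<Sum>a\<in>UNIV. Fv z0 $ a * Cd a (Q z0) (0, axis K 1)) = 0" for K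
      using DH0[of "(axis K 1, 0)"] by (simp add: DH_def)
    have dqL: "d_q (\<lambda>v' q'. Lfull L0 C v' q' (Fv z0)) K 0 q0 = 0" for K
    proof -
      have "((\<lambda>(v,q). Lfull L0 C v q (Fv z0)) has_derivative (\<lambda>h. L0' (Q z0) h + (\<Sum>a\<in>UNIV. Fv z0 $ a * Cd a (Q z0) h))) (at (0, q0))"
        using Lfd[OF QD0, of "Fv z0"] Qz0 by simp
      from d_q_eq[where f="\<lambda>v' q'. Lfull L0 C v' q' (Fv z0)", OF this]
      show ?thesis using critq[of K] by simp
    qed
    have D0: "(0, q0) \<in> D" using QD0 Qz0 by simp
    have C00: "C 0 q0 = 0" using C0 qv0 by (simp add: q0_def)
    obtain a K where c0ne: "d_q (\<lambda>v' q'. C v' q' $ a) K 0 q0 \<noteq> 0"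
      using cond3 D0 C00 dqL by blast
    define c0 where "c0 = Cd a (Q z0) (0, axis K 1)"
    have "d_q (\<lambda>v' q'. C v' q' $ a) K 0 q0 = c0"
    proof -
      have "((\<lambda>(v,q). C v q $ a) has_derivative Cd a (Q z0)) (at (0, q0))"
        using Cdd[OF QD0, of a] Qz0 by (simp add: Cc_def)
      from d_q_eq[where f="\<lambda>v' q'. C v' q' $ a", OF this] show ?thesis by (simp add: c0_def)
    qed
    then have c0ne': "c0 \<noteq> 0" using c0ne by simp
    define u where "u = (\<chi> J. Cd a (Q z0) (axis J 1, 0))"
    define wp where "wp = sgn c0 *\<^sub>R u"
    define w where "w = ((0::real^'n), sg *\<^sub>R wp)"
    define ew where "ew = (axis K (1::real), (0::real^'n))"
    have new: "norm ew = 1" by (simp add: ew_def)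
    define Phi where "Phi = (\<lambda>z. \<Sum>J\<in>UNIV. qv z $ J * wp $ J)"
    define Phi' where "Phi' = (\<lambda>h. \<Sum>J\<in>UNIV. qd' J z0 h * wp $ J)"
    have Phid: "(Phi has_derivative Phi') (at z0)"
      unfolding Phi_def Phi'_def
      by (intro has_derivative_sum has_derivative_mult_left qdd[OF z0U])
    have Phi'eq: "Phi' h = - sgn c0 * Cd a (Q z0) (0, fst h)" for h
    proof -
      define v' where "v' = (\<chi> I. qd' I z0 h)"
      have "Phi' h = sgn c0 * (\<Sum>J\<in>UNIV. v' $ J * Cd a (Q z0) (axis J 1, 0))"
        by (simp add: Phi'_def wp_def u_def v'_def sum_distrib_left mult.left_commute mult.commute)
      also have "\<dots> = sgn c0 * Cd a (Q z0) (v', 0)" using lin_sum_axis[OF linC0[of a]] by simp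
      also have "Cd a (Q z0) (v', 0) = - Cd a (Q z0) (0, fst h)"
        using lin_pair_split[OF linC0[of a], of v' "fst h"] constr[OF z0U, of a h]
        by (simp add: DQ_def v'_def)
      finally show ?thesis by simp
    qed
    have Phi0: "Phi z0 = 0" by (simp add: Phi_def qv0)
    have Phi'line: "Phi' (s *\<^sub>R ew + t *\<^sub>R w) = - \<bar>c0\<bar> * s" for s t
    proof -
      have "Cd a (Q z0) (0, s *\<^sub>R axis K 1) = s * c0"
        using linear_scale[OF linC0[of a], of s "(0, axis K 1)"] by (simp add: c0_def)
      then show ?thesis using c0ne' by (simp add: Phi'eq ew_def w_def sgn_if)
    qed
    define Psi where "Psi = (\<lambda>z. - L0' (Q z) (0, axis K 1) - (\<Sum>b\<in>UNIV. Fv z $ b * Cd b (Q z) (0, axis K 1)))"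
    have Psi0: "Psi z0 = 0" using critq[of K] by (simp add: Psi_def)
    have Qdiff: "Q differentiable (at z0)" using Qd[OF z0U] by (auto simp: differentiable_def)
    have L0'diff: "(\<lambda>x. L0' x h) differentiable (at (Q z0))" for h
      using L0C1[of h] QD0 unfolding C1_on_def differentiable_def by blast
    have Cd'diff: "(\<lambda>x. Cd b x h) differentiable (at (Q z0))" for b h
      using CdC1[of b h] QD0 unfolding C1_on_def differentiable_def by blast
    have Fdiff: "(\<lambda>z. Fv z $ b) differentiable (at z0)" for b
      using Fd[OF z0U] by (auto simp: differentiable_def)
    have "Psi differentiable (at z0)"
      unfolding Psi_def
      by (intro differentiable_diff differentiable_minus differentiable_sum differentiable_mult ballI
            finite_UNIV Fdiff differentiable_compose[OF L0'diff Qdiff] differentiable_compose[OF Cd'diff Qdiff]) simp_all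
    then obtain Psi' where Psid: "(Psi has_derivative Psi') (at z0)" by (auto simp: differentiable_def)
    have linPsi': "linear Psi'" using has_derivative_bounded_linear[OF Psid] bounded_linear.linear by blast
    obtain \<delta>p where \<delta>p: "\<delta>p > 0" and \<delta>pb: "\<forall>y. norm (y - z0) < \<delta>p \<longrightarrow> norm (Psi y - Psi z0 - Psi' (y - z0)) \<le> 1 * norm (y - z0)"
      using Psid unfolding has_derivative_at_alt by (meson zero_less_one)
    define M where "M = \<bar>Psi' ew\<bar> + 1"
    define d where "d = min \<rho> \<delta>p / (2 * (1 + norm w))"
    have nw: "1 + norm w > 0" "1 + norm w \<noteq> 0" "2 + 2 * norm w \<noteq> 0" "2 * (1 + norm w) \<noteq> 0"
      by (simp_all add: add_pos_nonneg) (smt (verit) norm_ge_zero)+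
    have d0: "d > 0" using \<rho> \<delta>p by (simp add: d_def add_pos_nonneg)
    have inball: "z0 + s *\<^sub>R ew + t *\<^sub>R w \<in> U \<and> norm (s *\<^sub>R ew + t *\<^sub>R w) < min \<rho> \<delta>p"
      if "0 \<le> s" "s < d" "0 \<le> t" "t < d" for s t
    proof -
      have "norm (s *\<^sub>R ew + t *\<^sub>R w) \<le> (s + t) * (1 + norm w)" by (rule norm_bd[OF new that(1,3)])
      also have "\<dots> < (2 * d) * (1 + norm w)"
        using that by (intro mult_strict_right_mono) (auto simp: add_pos_nonneg)
      also have "\<dots> = min \<rho> \<delta>p" using nw by (simp add: d_def field_simps)
      finally have n: "norm (s *\<^sub>R ew + t *\<^sub>R w) < min \<rho> \<delta>p" .
      have "dist z0 (z0 + s *\<^sub>R ew + t *\<^sub>R w) = norm (s *\<^sub>R ew + t *\<^sub>R w)"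
        by (metis add.assoc add.right_neutral dist_add_cancel dist_0_norm)
      then have "z0 + s *\<^sub>R ew + t *\<^sub>R w \<in> ball z0 \<rho>" using n by simp
      then show ?thesis using \<rho> n by blast
    qed
    define G where "G = (\<lambda>s t. sg * H (z0 + s *\<^sub>R ew + t *\<^sub>R w))"
    define phi where "phi = (\<lambda>s t. Phi (z0 + s *\<^sub>R ew + t *\<^sub>R w))"
    define psi where "psi = (\<lambda>s. sg * Psi (z0 + s *\<^sub>R ew))"
    have DHw: "sg * DH z w = Phi z" if "z \<in> U" for z
    proof -
      have "Q z \<in> D" using sol'[OF that] by simp
      then have "L0' (Q z) (0, 0) = 0" "\<And>b. Cd b (Q z) (0, 0) = 0"
        using linear_0[OF linL0] linear_0[OF linCd] by (auto simp: zero_prod_def)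
      then have "DH z w = (\<Sum>I\<in>UNIV. qv z $ I * (sg * wp $ I))" by (simp add: DH_def w_def)
      then have "sg * DH z w = (\<Sum>I\<in>UNIV. (sg * sg) * (qv z $ I * wp $ I))"
        by (simp add: sum_distrib_left) (rule sum.cong, simp_all add: mult_ac)
      then show ?thesis using sg2 by (simp add: Phi_def)
    qed
    have DHe: "DH z ew = Psi z" for z by (simp add: DH_def ew_def Psi_def)
    have dt: "((\<lambda>t. G s t) has_real_derivative phi s t) (at t)"
      if "0 \<le> s" "s < d" "0 \<le> t" "t < d" for s t
    proof -
      have zU: "z0 + s *\<^sub>R ew + t *\<^sub>R w \<in> U" using inball[OF that] by blast
      have "((\<lambda>t. H ((z0 + s *\<^sub>R ew) + t *\<^sub>R w)) has_real_derivative DH (z0 + s *\<^sub>R ew + t *\<^sub>R w) w) (at t)"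
        by (rule line_deriv) (use Hd[OF zU] in simp)
      from DERIV_cmult[OF this, of sg] show ?thesis
        using DHw[OF zU] by (simp add: G_def phi_def)
    qed
    have ds: "((\<lambda>s. G s 0) has_real_derivative psi s) (at s)"
      if "0 \<le> s" "s < d" for s
    proof -
      have zU: "z0 + s *\<^sub>R ew \<in> U" using inball[OF that, of 0] d0 by simp
      have "((\<lambda>s. H (z0 + s *\<^sub>R ew)) has_real_derivative DH (z0 + s *\<^sub>R ew) ew) (at s)"
        by (rule line_deriv) (use Hd[OF zU] in simp)
      from DERIV_cmult[OF this, of sg] show ?thesis
        using DHe by (simp add: G_def psi_def)
    qed
    have psib: "\<bar>psi s\<bar> \<le> M * s" if "0 \<le> s" "s < d" for s
    proof -
      have n: "norm (s *\<^sub>R ew) < \<delta>p" using inball[OF that, of 0] d0 by simp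
      have "norm (Psi (z0 + s *\<^sub>R ew) - Psi z0 - Psi' (s *\<^sub>R ew)) \<le> norm (s *\<^sub>R ew)"
        using \<delta>pb n by (metis add_diff_cancel_left' mult_1)
      then have "\<bar>Psi (z0 + s *\<^sub>R ew) - s * Psi' ew\<bar> \<le> s"
        using Psi0 linear_scale[OF linPsi', of s ew] new that by simp
      moreover have "\<bar>s * Psi' ew\<bar> = s * \<bar>Psi' ew\<bar>" using that by (simp add: abs_mult)
      ultimately have "\<bar>Psi (z0 + s *\<^sub>R ew)\<bar> \<le> s + s * \<bar>Psi' ew\<bar>" by arith
      then have "\<bar>Psi (z0 + s *\<^sub>R ew)\<bar> \<le> M * s" by (simp add: M_def algebra_simps)
      then show ?thesis using sg by (auto simp: psi_def)
    qed
    have phib: "\<exists>\<delta>>0. \<forall>s t. 0 \<le> s \<longrightarrow> s < \<delta> \<longrightarrow> 0 \<le> t \<longrightarrow> t < \<delta> \<longrightarrow> \<bar>phi s t + \<bar>c0\<bar> * s\<bar> \<le> \<epsilon> * (s + t)"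
      if "\<epsilon> > 0" for \<epsilon>
    proof -
      have "\<epsilon> / (1 + norm w) > 0" using that by (simp add: add_pos_nonneg)
      then obtain \<delta>f where \<delta>f: "\<delta>f > 0" and \<delta>fb: "\<forall>y. norm (y - z0) < \<delta>f \<longrightarrow> norm (Phi y - Phi z0 - Phi' (y - z0)) \<le> \<epsilon> / (1 + norm w) * norm (y - z0)"
        using Phid unfolding has_derivative_at_alt by blast
      show ?thesis
      proof (intro exI[of _ "\<delta>f / (2 * (1 + norm w))"] conjI allI impI)
        show "\<delta>f / (2 * (1 + norm w)) > 0" using \<delta>f by (simp add: add_pos_nonneg)
        fix s t assume st: "0 \<le> s" "s < \<delta>f / (2 * (1 + norm w))" "0 \<le> t" "t < \<delta>f / (2 * (1 + norm w))"
        have nb: "norm (s *\<^sub>R ew + t *\<^sub>R w) \<le> (s + t) * (1 + norm w)" by (rule norm_bd[OF new st(1,3)])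
        also have "\<dots> < \<delta>f"
        proof -
          have "(s + t) < \<delta>f / (1 + norm w)" using st nw by (simp add: field_simps)
          then show ?thesis by (simp add: field_simps nw)
        qed
        finally have "norm (s *\<^sub>R ew + t *\<^sub>R w) < \<delta>f" .
        then have "\<bar>Phi (z0 + s *\<^sub>R ew + t *\<^sub>R w) - Phi' (s *\<^sub>R ew + t *\<^sub>R w)\<bar> \<le> \<epsilon> / (1 + norm w) * norm (s *\<^sub>R ew + t *\<^sub>R w)"
          using \<delta>fb[rule_format, of "z0 + s *\<^sub>R ew + t *\<^sub>R w"] Phi0 by (simp add: add.assoc)
        also have "\<dots> \<le> \<epsilon> / (1 + norm w) * ((s + t) * (1 + norm w))"
          using nb that by (intro mult_left_mono) (auto simp: add_pos_nonneg)
        also have "\<dots> = \<epsilon> * (s + t)" by (simp add: field_simps nw)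
        finally show "\<bar>phi s t + \<bar>c0\<bar> * s\<bar> \<le> \<epsilon> * (s + t)"
          using Phi'line[of s t] by (simp add: phi_def)
      qed
    qed
    define e where "e = min d (e0 / (2 * (1 + norm w)))"
    have epos: "e > 0" using d0 e0 by (simp add: e_def add_pos_nonneg)
    obtain s t where st: "0 \<le> s" "s < e" "0 \<le> t" "t < e" and lt: "G s t < G 0 0"
      using key[of "\<bar>c0\<bar>" d e G phi psi M, OF _ d0 epos dt ds psib phib] c0ne' by auto
    have std: "s < d" "t < d" using st by (auto simp: e_def)
    have yU: "z0 + s *\<^sub>R ew + t *\<^sub>R w \<in> U" using inball[OF st(1) std(1) st(3) std(2)] by blast
    have "norm (s *\<^sub>R ew + t *\<^sub>R w) \<le> (s + t) * (1 + norm w)" by (rule norm_bd[OF new st(1,3)])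
    also have "\<dots> < e0"
    proof -
      have "(s + t) < e0 / (1 + norm w)" using st nw by (simp add: e_def field_simps)
      then show ?thesis by (simp add: field_simps nw)
    qed
    finally have nle: "norm (s *\<^sub>R ew + t *\<^sub>R w) < e0" .
    have "dist (z0 + s *\<^sub>R ew + t *\<^sub>R w) z0 = norm (s *\<^sub>R ew + t *\<^sub>R w)"
      by (metis add.assoc add.right_neutral dist_add_cancel dist_0_norm dist_commute)
    then have "dist (z0 + s *\<^sub>R ew + t *\<^sub>R w) z0 < e0" using nle by simp
    then have "sg * H z0 \<le> sg * H (z0 + s *\<^sub>R ew + t *\<^sub>R w)" using ext yU by blast
    then show False using lt by (simp add: G_def)
  qed
  show ?thesis
  proof (intro ballI conjI notI)
    fix z assume zU: "z \<in> U"
    {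
      assume "local_min_at U (H_onshell L0 qd) z"
      then obtain e0 where "e0 > 0" "\<forall>y\<in>U. dist y z < e0 \<longrightarrow> 1 * H z \<le> 1 * H y"
        unfolding local_min_at_def H_def by auto
      then show False using main[OF zU, of 1 e0] by auto
    }
    {
      assume "local_max_at U (H_onshell L0 qd) z"
      then obtain e0 where "e0 > 0" "\<forall>y\<in>U. dist y z < e0 \<longrightarrow> (-1) * H z \<le> (-1) * H y"
        unfolding local_max_at_def H_def by auto
      then show False using main[OF zU, of "-1" e0] by auto
    }
  qed
qed

end
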